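(* Let $k$ be a positive integer, $V=[k]\times[k]$, terminals $t_i=(i,i)$, and $\gamma=2\lfloor 2k-\sqrt{3k^2-2k}\rfloor$. Let $f$ be the function on $2^V$ defined below with this $\gamma$. Call a partition $(A_1,\ldots,A_k)$ of $V$ with $t_\ell\in A_\ell$ for all $\ell$ an assignment, with cost $\sum_{\ell=1}^k f(A_\ell)$, and call it symmetric if $(i,j)$ and $(j,i)$ lie in the same part for all $i,j$. Then the ratio of the minimum cost of a symmetric assignment to the minimum cost of an assignment is at least $\frac{8\sqrt3-12}{2\sqrt3-2}-O(\frac1k)$.
   Context: Rows $R_i=\{(i,j):j\in[k]\}$, columns $C_i=\{(j,i):j\in[k]\}$. Define $\phi:\mathbb{R}\to\mathbb{R}$ by $\phi(t)=t$ if $t\le k-\gamma/2$ and $\phi(t)=2k-t-\gamma$ otherwise. For $i\in[k]$ and $S\subseteq V$ let $g_i(S)=\phi(|S|)$ if $t_i\notin S$ and $g_i(S)=\phi(k-|S|)$ if $t_i\in S$. Then $f(S)=\sum_{i=1}^k g_i(S\cap R_i)+\sum_{i=1}^k g_i(S\cap C_i)$. *)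

theory Defs
  imports Complex_Main
begin

definition Vset :: "nat \<Rightarrow> (nat \<times> nat) set" where
  "Vset k = {1..k} \<times> {1..k}"

definition Row :: "nat \<Rightarrow> nat \<Rightarrow> (nat \<times> nat) set" where
  "Row k i = {(i, j) | j. j \<in> {1..k}}"

definition Col :: "nat \<Rightarrow> nat \<Rightarrow> (nat \<times> nat) set" where
  "Col k i = {(j, i) | j. j \<in> {1..k}}"

definition gam :: "nat \<Rightarrow> real" where
  "gam k = 2 * of_int \<lfloor>2 * real k - sqrt (3 * (real k)^2 - 2 * real k)\<rfloor>"

definition phi :: "nat \<Rightarrow> real \<Rightarrow> real" where
  "phi k t = (if t \<le> real k - gam k / 2 then t else 2 * real k - t - gam k)"

definition gfun :: "nat \<Rightarrow> nat \<Rightarrow> (nat \<times> nat) set \<Rightarrow> real" where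
  "gfun k i S = (if (i, i) \<notin> S then phi k (real (card S)) else phi k (real k - real (card S)))"

definition fcut :: "nat \<Rightarrow> (nat \<times> nat) set \<Rightarrow> real" where
  "fcut k S = (\<Sum>i = 1..k. gfun k i (S \<inter> Row k i)) + (\<Sum>i = 1..k. gfun k i (S \<inter> Col k i))"

definition is_assignment :: "nat \<Rightarrow> (nat \<Rightarrow> (nat \<times> nat) set) \<Rightarrow> bool" where
  "is_assignment k A \<longleftrightarrow>
     (\<forall>l \<in> {1..k}. (l, l) \<in> A l) \<and>
     (\<forall>l \<in> {1..k}. \<forall>m \<in> {1..k}. l \<noteq> m \<longrightarrow> A l \<inter> A m = {}) \<and>
     (\<Union>l \<in> {1..k}. A l) = Vset k"

definition is_symmetric :: "nat \<Rightarrow> (nat \<Rightarrow> (nat \<times> nat) set) \<Rightarrow> bool" where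
  "is_symmetric k A \<longleftrightarrow>
     (\<forall>i \<in> {1..k}. \<forall>j \<in> {1..k}. \<forall>l \<in> {1..k}. (i, j) \<in> A l \<longleftrightarrow> (j, i) \<in> A l)"

definition cost :: "nat \<Rightarrow> (nat \<Rightarrow> (nat \<times> nat) set) \<Rightarrow> real" where
  "cost k A = (\<Sum>l = 1..k. fcut k (A l))"

definition min_cost :: "nat \<Rightarrow> real" where
  "min_cost k = Min {cost k A | A. is_assignment k A}"

definition min_sym_cost :: "nat \<Rightarrow> real" where
  "min_sym_cost k = Min {cost k A | A. is_assignment k A \<and> is_symmetric k A}"

end

theory Submission
  imports Defs
begin


lemma Row_eq: "Row k i = {i} \<times> {1..k}" unfolding Row_def by auto
lemma Col_eq: "Col k i = {1..k} \<times> {i}" unfolding Col_def by auto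

lemma asg_sub: "is_assignment k A \<Longrightarrow> l \<in> {1..k} \<Longrightarrow> A l \<subseteq> Vset k"
  unfolding is_assignment_def by blast

lemma asg_uniq: "is_assignment k A \<Longrightarrow> l \<in> {1..k} \<Longrightarrow> m \<in> {1..k} \<Longrightarrow> p \<in> A l \<Longrightarrow> p \<in> A m \<Longrightarrow> l = m"
  unfolding is_assignment_def by blast

lemma asg_diag: "is_assignment k A \<Longrightarrow> l \<in> {1..k} \<Longrightarrow> i \<in> {1..k} \<Longrightarrow> (i,i) \<in> A l \<longleftrightarrow> l = i"
  using asg_uniq[of k A l i "(i,i)"] unfolding is_assignment_def by blast

lemma asg_cover: "is_assignment k A \<Longrightarrow> p \<in> Vset k \<Longrightarrow> \<exists>l\<in>{1..k}. p \<in> A l"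
  unfolding is_assignment_def by blast

definition acnt :: "nat \<Rightarrow> (nat \<Rightarrow> (nat \<times> nat) set) \<Rightarrow> nat \<Rightarrow> nat \<Rightarrow> nat" where
  "acnt k A j l = card (A l \<inter> Row k j)"

definition rc :: "nat \<Rightarrow> (nat \<Rightarrow> (nat \<times> nat) set) \<Rightarrow> nat \<Rightarrow> real" where
  "rc k A j = (\<Sum>l\<in>{1..k}-{j}. phi k (real (acnt k A j l))) + phi k (real k - real (acnt k A j j))"

lemma row_sum:
  assumes "is_assignment k A" "j \<in> {1..k}"
  shows "(\<Sum>l\<in>{1..k}. acnt k A j l) = k"
proof -
  have "Row k j = (\<Union>l\<in>{1..k}. A l \<inter> Row k j)"
    using asg_cover[OF assms(1)] assms(2) unfolding Row_eq Vset_def by blast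
  hence "card (Row k j) = card (\<Union>l\<in>{1..k}. A l \<inter> Row k j)" by simp
  also have "\<dots> = (\<Sum>l\<in>{1..k}. card (A l \<inter> Row k j))"
    apply (rule card_UN_disjoint)
    using asg_uniq[OF assms(1)] by (auto simp: Row_eq)
  finally show ?thesis unfolding acnt_def by (simp add: Row_eq card_cartesian_product)
qed

lemma gfun_row:
  assumes "is_assignment k A" "i \<in> {1..k}" "l \<in> {1..k}"
  shows "gfun k i (A l \<inter> Row k i) = (if l = i then phi k (real k - real (acnt k A i i)) else phi k (real (acnt k A i l)))"
  using asg_diag[OF assms(1,3,2)] assms(2) unfolding gfun_def acnt_def by (auto simp: Row_eq)

lemma col_card:
  assumes "is_assignment k A" "is_symmetric k A" "i \<in> {1..k}" "l \<in> {1..k}"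
  shows "A l \<inter> Col k i = prod.swap ` (A l \<inter> Row k i)"
proof -
  have sub: "A l \<subseteq> Vset k" using asg_sub assms by blast
  show ?thesis
  proof
    show "A l \<inter> Col k i \<subseteq> prod.swap ` (A l \<inter> Row k i)"
    proof
      fix p assume p: "p \<in> A l \<inter> Col k i"
      then obtain a where pa: "p = (a,i)" "a \<in> {1..k}" by (auto simp: Col_eq)
      have "(i,a) \<in> A l" using assms(2,3,4) p pa unfolding is_symmetric_def by blast
      thus "p \<in> prod.swap ` (A l \<inter> Row k i)" using pa by (intro image_eqI[where x="(i,a)"]) (auto simp: Row_eq)
    qed
  next
    show "prod.swap ` (A l \<inter> Row k i) \<subseteq> A l \<inter> Col k i"
    proof
      fix p assume "p \<in> prod.swap ` (A l \<inter> Row k i)"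
      then obtain a where pa: "p = (a,i)" "a \<in> {1..k}" "(i,a) \<in> A l" by (auto simp: Row_eq)
      have "(a,i) \<in> A l" using assms(2,3,4) pa unfolding is_symmetric_def by blast
      thus "p \<in> A l \<inter> Col k i" using pa by (auto simp: Col_eq)
    qed
  qed
qed

lemma gfun_col:
  assumes "is_assignment k A" "is_symmetric k A" "i \<in> {1..k}" "l \<in> {1..k}"
  shows "gfun k i (A l \<inter> Col k i) = gfun k i (A l \<inter> Row k i)"
proof -
  have c: "card (A l \<inter> Col k i) = card (A l \<inter> Row k i)"
    using col_card[OF assms] by (simp add: card_image)
  have "(i,i) \<in> A l \<inter> Col k i \<longleftrightarrow> (i,i) \<in> A l \<inter> Row k i" using assms(3) by (auto simp: Row_eq Col_eq)
  thus ?thesis using c unfolding gfun_def by simp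
qed

lemma rc_eq:
  assumes "is_assignment k A" "i \<in> {1..k}"
  shows "(\<Sum>l\<in>{1..k}. gfun k i (A l \<inter> Row k i)) = rc k A i"
proof -
  have "(\<Sum>l\<in>{1..k}. gfun k i (A l \<inter> Row k i)) = gfun k i (A i \<inter> Row k i) + (\<Sum>l\<in>{1..k}-{i}. gfun k i (A l \<inter> Row k i))"
    using assms(2) by (simp add: sum.remove)
  also have "\<dots> = rc k A i" unfolding rc_def
    using gfun_row[OF assms(1,2)] assms(2) by (simp add: add.commute)
  finally show ?thesis .
qed

lemma cost_sym:
  assumes "is_assignment k A" "is_symmetric k A"
  shows "cost k A = 2 * (\<Sum>i\<in>{1..k}. rc k A i)"
proof -
  have "cost k A = (\<Sum>l\<in>{1..k}. 2 * (\<Sum>i\<in>{1..k}. gfun k i (A l \<inter> Row k i)))"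
    unfolding cost_def fcut_def
    apply (rule sum.cong, simp)
    using gfun_col[OF assms] by simp
  also have "\<dots> = 2 * (\<Sum>i\<in>{1..k}. \<Sum>l\<in>{1..k}. gfun k i (A l \<inter> Row k i))"
    by (simp add: sum_distrib_left[symmetric], subst sum.swap, simp)
  also have "\<dots> = 2 * (\<Sum>i\<in>{1..k}. rc k A i)" using rc_eq[OF assms(1)] by simp
  finally show ?thesis .
qed



definition ownS :: "(nat \<Rightarrow> (nat \<times> nat) set) \<Rightarrow> nat \<Rightarrow> nat set \<Rightarrow> nat set" where
  "ownS A j X = {i \<in> X. i \<noteq> j \<and> (j,i) \<in> A j}"
definition cownS :: "(nat \<Rightarrow> (nat \<times> nat) set) \<Rightarrow> nat \<Rightarrow> nat set \<Rightarrow> nat set" where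
  "cownS A j X = {i \<in> X. i \<noteq> j \<and> (j,i) \<in> A i}"

lemma acnt_diag:
  assumes asg: "is_assignment k A" and j: "j \<in> {1..k}"
  shows "acnt k A j j = 1 + card (ownS A j {1..k})"
proof -
  have sub: "A j \<subseteq> Vset k" using asg_sub[OF asg j] .
  have "A j \<inter> Row k j = insert (j,j) (Pair j ` ownS A j {1..k})"
  proof
    show "A j \<inter> Row k j \<subseteq> insert (j,j) (Pair j ` ownS A j {1..k})"
      unfolding ownS_def Row_eq by auto
    show "insert (j,j) (Pair j ` ownS A j {1..k}) \<subseteq> A j \<inter> Row k j"
      using asg j unfolding ownS_def Row_eq is_assignment_def by auto
  qed
  moreover have "(j,j) \<notin> Pair j ` ownS A j {1..k}" unfolding ownS_def by auto
  moreover have "finite (ownS A j {1..k})" unfolding ownS_def by auto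
  ultimately show ?thesis unfolding acnt_def by (simp add: card_image inj_on_def)
qed

lemma ownS_split:
  assumes "N \<union> G = {1..k}" "N \<inter> G = {}"
  shows "card (ownS A j {1..k}) = card (ownS A j N) + card (ownS A j G)"
proof -
  have "ownS A j {1..k} = ownS A j N \<union> ownS A j G" using assms(1) unfolding ownS_def by auto
  moreover have "finite N" "finite G" using assms(1) by (metis finite_Un finite_atLeastAtMost)+
  ultimately show ?thesis using assms(2) unfolding ownS_def by (simp add: card_Un_disjoint disjoint_iff)
qed

lemma phi_id: "t \<le> real k - gam k / 2 \<Longrightarrow> phi k t = t" unfolding phi_def by simp
lemma phi_big: "t > real k - gam k / 2 \<Longrightarrow> phi k t = 2 * real k - t - gam k" unfolding phi_def by simp

lemma grow:
  assumes asg: "is_assignment k A" and j: "j \<in> {1..k}" and L: "L \<in> {1..k}" "L \<noteq> j"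
    and big: "real (acnt k A j L) > real k - gam k / 2" and gk: "gam k \<le> real k" and N: "N \<subseteq> {1..k}"
  shows "rc k A j \<ge> 2 * (real k - gam k) + 2 * real (card (cownS A j N))"
proof -
  define b where "b = acnt k A j L"
  define d where "d = acnt k A j j"
  define c where "c = card (cownS A j N)"
  define R where "R = (\<Sum>l\<in>{1..k}-{j}-{L}. acnt k A j l)"
  have finN: "finite N" using N finite_subset by blast
  have fin: "finite (cownS A j N)" unfolding cownS_def using finN by auto
  have "(\<Sum>l\<in>{1..k}. acnt k A j l) = k" using row_sum[OF asg j] .
  moreover have "(\<Sum>l\<in>{1..k}. acnt k A j l) = d + (\<Sum>l\<in>{1..k}-{j}. acnt k A j l)"
    using j unfolding d_def by (simp add: sum.remove)
  moreover have "(\<Sum>l\<in>{1..k}-{j}. acnt k A j l) = b + R"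
    using L unfolding b_def R_def by (simp add: sum.remove)
  ultimately have sumk: "d + b + R = k" by simp
  have les: "acnt k A j l \<le> R" if "l \<in> {1..k}-{j}-{L}" for l
    unfolding R_def by (rule member_le_sum) (use that in auto)
  have d1: "d \<ge> 1" using acnt_diag[OF asg j] unfolding d_def by simp
  have cdisj: "d + b + card (cownS A j N - {L}) \<le> k"
  proof -
    let ?S1 = "A j \<inter> Row k j" and ?S2 = "A L \<inter> Row k j" and ?S3 = "Pair j ` (cownS A j N - {L})"
    have f1: "finite ?S1" "finite ?S2" "finite ?S3" using fin by (auto simp: Row_eq)
    have dj12: "?S1 \<inter> ?S2 = {}" using asg_uniq[OF asg j L(1)] L(2) by blast
    have dj3: "(?S1 \<union> ?S2) \<inter> ?S3 = {}"
    proof -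
      have "p \<notin> ?S3" if "p \<in> ?S1 \<union> ?S2" for p
      proof
        assume "p \<in> ?S3"
        then obtain i where i: "p = (j,i)" "i \<in> N" "i \<noteq> j" "i \<noteq> L" "(j,i) \<in> A i"
          unfolding cownS_def by auto
        have iK: "i \<in> {1..k}" using i N by auto
        show False using that i asg_uniq[OF asg iK j] asg_uniq[OF asg iK L(1)] by auto
      qed
      thus ?thesis by blast
    qed
    have "card (?S1 \<union> ?S2 \<union> ?S3) = d + b + card (cownS A j N - {L})"
      using f1 dj12 dj3 unfolding d_def b_def acnt_def
      by (simp add: card_Un_disjoint card_image inj_on_def)
    moreover have "card (?S1 \<union> ?S2 \<union> ?S3) \<le> card (Row k j)"
      apply (rule card_mono) using N by (auto simp: Row_eq cownS_def)
    ultimately show ?thesis by (simp add: Row_eq card_cartesian_product)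
  qed
  have cL: "c \<le> card (cownS A j N - {L}) + 1"
    using diff_card_le_card_Diff[OF finite.insertI[OF finite.emptyI, of L], of "cownS A j N"]
    unfolding c_def by simp
  have phib: "phi k (real b) = 2 * real k - real b - gam k" using big phi_big unfolding b_def by simp
  have phis: "phi k (real k - real d) = 2 * real k - (real k - real d) - gam k"
    using sumk big unfolding b_def by (intro phi_big) linarith
  have phir: "phi k (real (acnt k A j l)) = real (acnt k A j l)" if "l \<in> {1..k}-{j}-{L}" for l
  proof (rule phi_id)
    have "real (acnt k A j l) \<le> real R" using les[OF that] by simp
    thus "real (acnt k A j l) \<le> real k - gam k / 2" using sumk d1 big gk unfolding b_def by linarith
  qed
  have "(\<Sum>l\<in>{1..k}-{j}. phi k (real (acnt k A j l))) = phi k (real b) + (\<Sum>l\<in>{1..k}-{j}-{L}. phi k (real (acnt k A j l)))"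
    using sum.remove[of "{1..k}-{j}" L "\<lambda>l. phi k (real (acnt k A j l))"] L unfolding b_def by simp
  also have "(\<Sum>l\<in>{1..k}-{j}-{L}. phi k (real (acnt k A j l))) = real R"
    unfolding R_def of_nat_sum using phir by simp
  finally have "rc k A j = phi k (real b) + real R + phi k (real k - real d)"
    unfolding rc_def d_def by simp
  hence "rc k A j = 4 * real k - 2 * real b - 2 * gam k" using phib phis sumk by simp
  moreover have "real b + real c \<le> real k" using cdisj cL d1 by linarith
  ultimately show ?thesis unfolding c_def by (simp add: algebra_simps)
qed

lemma nrow:
  assumes asg: "is_assignment k A" and j: "j \<in> {1..k}"
    and small: "\<forall>l\<in>{1..k}-{j}. real (acnt k A j l) \<le> real k - gam k / 2"
    and NG: "N \<union> G = {1..k}" "N \<inter> G = {}"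
  shows "rc k A j + 2 * real (card (ownS A j G)) \<ge> 2 * (real k - gam k) + gam k - 2 * max 0 (real (card (ownS A j N)) - (gam k / 2 - 1))"
proof -
  define d where "d = acnt k A j j"
  have "(\<Sum>l\<in>{1..k}. acnt k A j l) = k" using row_sum[OF asg j] .
  moreover have "(\<Sum>l\<in>{1..k}. acnt k A j l) = d + (\<Sum>l\<in>{1..k}-{j}. acnt k A j l)"
    using j unfolding d_def by (simp add: sum.remove)
  ultimately have sumk: "real d + real (\<Sum>l\<in>{1..k}-{j}. acnt k A j l) = real k" by (metis of_nat_add)
  have "(\<Sum>l\<in>{1..k}-{j}. phi k (real (acnt k A j l))) = (\<Sum>l\<in>{1..k}-{j}. real (acnt k A j l))"
    using small phi_id by (intro sum.cong) auto
  hence rc: "rc k A j = (real k - real d) + phi k (real k - real d)"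
    unfolding rc_def d_def using sumk unfolding of_nat_sum d_def by simp
  have dd: "real d = 1 + real (card (ownS A j N)) + real (card (ownS A j G))"
    using acnt_diag[OF asg j] ownS_split[OF NG] unfolding d_def by simp
  show ?thesis
  proof (cases "real k - real d \<le> real k - gam k / 2")
    case True
    thus ?thesis using rc phi_id[OF True] dd by (simp add: max_def)
  next
    case False
    hence "phi k (real k - real d) = 2 * real k - (real k - real d) - gam k" by (simp add: phi_big)
    thus ?thesis using rc dd by (simp add: max_def)
  qed
qed



lemma card_filter_sum: "finite X \<Longrightarrow> card {x\<in>X. P x} = (\<Sum>x\<in>X. if P x then 1 else 0::nat)"
  by (simp add: sum.inter_filter[symmetric])

lemma sym_mem:
  assumes "is_symmetric k A" "i \<in> {1..k}" "j \<in> {1..k}" "l \<in> {1..k}"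
  shows "(i,j) \<in> A l \<longleftrightarrow> (j,i) \<in> A l"
  using assms unfolding is_symmetric_def by blast

lemma double_count:
  assumes asg: "is_assignment k A" and sym: "is_symmetric k A" and N: "N \<subseteq> {1..k}" and G: "G \<subseteq> {1..k}"
  shows "(\<Sum>j\<in>N. card (ownS A j G)) = (\<Sum>i\<in>G. card (cownS A i N))"
proof -
  have fN: "finite N" and fG: "finite G" using N G finite_subset by blast+
  have "(\<Sum>j\<in>N. card (ownS A j G)) = (\<Sum>j\<in>N. \<Sum>i\<in>G. if i \<noteq> j \<and> (j,i) \<in> A j then 1 else 0)"
    unfolding ownS_def using fG by (simp add: card_filter_sum)
  also have "\<dots> = (\<Sum>i\<in>G. \<Sum>j\<in>N. if i \<noteq> j \<and> (j,i) \<in> A j then 1 else 0)" by (rule sum.swap)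
  also have "\<dots> = (\<Sum>i\<in>G. \<Sum>j\<in>N. if j \<noteq> i \<and> (i,j) \<in> A j then 1 else 0)"
  proof (intro sum.cong refl)
    fix i j assume "i \<in> G" "j \<in> N"
    hence iK: "i \<in> {1..k}" "j \<in> {1..k}" using N G by auto
    have "(i,j) \<in> A j \<longleftrightarrow> (j,i) \<in> A j" using sym_mem[OF sym iK(1) iK(2) iK(2)] .
    thus "(if i \<noteq> j \<and> (j,i) \<in> A j then 1 else 0::nat) = (if j \<noteq> i \<and> (i,j) \<in> A j then 1 else 0)" by auto
  qed
  also have "\<dots> = (\<Sum>i\<in>G. card (cownS A i N))"
    unfolding cownS_def using fN by (simp add: card_filter_sum)
  finally show ?thesis .
qed

lemma landau_inner:
  assumes asg: "is_assignment k A" and sym: "is_symmetric k A" and X: "X \<subseteq> {1..k}"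
  shows "2 * (\<Sum>j\<in>X. card (ownS A j X)) \<le> card X * (card X - 1)"
proof -
  have fX: "finite X" using X finite_subset by blast
  define P where "P j i = (if i \<noteq> j \<and> (j,i) \<in> A j then 1 else 0::nat)" for j i
  have e: "(\<Sum>j\<in>X. card (ownS A j X)) = (\<Sum>j\<in>X. \<Sum>i\<in>X. P j i)"
    unfolding ownS_def P_def using fX by (simp add: card_filter_sum)
  have sw: "(\<Sum>j\<in>X. \<Sum>i\<in>X. P j i) = (\<Sum>j\<in>X. \<Sum>i\<in>X. P i j)" by (rule sum.swap)
  have pt: "P j i + P i j \<le> (if i \<noteq> j then 1 else 0)" if "i \<in> X" "j \<in> X" for i j
  proof (cases "i = j")
    case True thus ?thesis unfolding P_def by simp
  next
    case False
    have "\<not> ((j,i) \<in> A j \<and> (i,j) \<in> A i)"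
    proof
      assume h: "(j,i) \<in> A j \<and> (i,j) \<in> A i"
      have iK: "i \<in> {1..k}" "j \<in> {1..k}" using that X by auto
      have "(j,i) \<in> A i" using h sym_mem[OF sym iK(1) iK(2) iK(1)] by simp
      thus False using h asg_uniq[OF asg iK(2) iK(1), of "(j,i)"] False by auto
    qed
    thus ?thesis unfolding P_def using False by auto
  qed
  have "2 * (\<Sum>j\<in>X. card (ownS A j X)) = (\<Sum>j\<in>X. \<Sum>i\<in>X. P j i + P i j)"
    using e sw by (simp add: sum.distrib)
  also have "\<dots> \<le> (\<Sum>j\<in>X. \<Sum>i\<in>X. if i \<noteq> j then 1 else 0)"
    by (intro sum_mono) (use pt in auto)
  also have "\<dots> = (\<Sum>j\<in>X. card (X - {j}))"
  proof (intro sum.cong refl)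
    fix j assume "j \<in> X"
    have "X - {j} = {i\<in>X. i \<noteq> j}" by auto
    thus "(\<Sum>i\<in>X. if i \<noteq> j then 1 else 0) = card (X - {j})" using fX by (simp add: card_filter_sum)
  qed
  also have "\<dots> = card X * (card X - 1)" using fX by simp
  finally show ?thesis .
qed

lemma landau:
  assumes asg: "is_assignment k A" and sym: "is_symmetric k A" and X: "X \<subseteq> N" and N: "N \<subseteq> {1..k}"
  shows "2 * (\<Sum>j\<in>X. card (ownS A j N)) \<le> 2 * (card X * (card N - card X)) + card X * (card X - 1)"
proof -
  have fN: "finite N" using N finite_subset by blast
  have fX: "finite X" using X fN finite_subset by blast
  have "card (ownS A j N) \<le> card (ownS A j X) + card (N - X)" for j
  proof -
    have "ownS A j N \<subseteq> ownS A j X \<union> (N - X)" unfolding ownS_def by auto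
    hence "card (ownS A j N) \<le> card (ownS A j X \<union> (N - X))" by (rule card_mono[rotated]) (use fN fX in \<open>auto simp: ownS_def\<close>)
    also have "\<dots> \<le> card (ownS A j X) + card (N - X)" by (rule card_Un_le)
    finally show ?thesis .
  qed
  hence "(\<Sum>j\<in>X. card (ownS A j N)) \<le> (\<Sum>j\<in>X. card (ownS A j X) + card (N - X))" by (intro sum_mono)
  also have "\<dots> = (\<Sum>j\<in>X. card (ownS A j X)) + card X * (card N - card X)"
    using X fX fN by (simp add: sum.distrib card_Diff_subset)
  finally have h1: "(\<Sum>j\<in>X. card (ownS A j N)) \<le> (\<Sum>j\<in>X. card (ownS A j X)) + card X * (card N - card X)" .
  have XK: "X \<subseteq> {1..k}" using X N by auto
  have h2: "2 * (\<Sum>j\<in>X. card (ownS A j X)) \<le> card X * (card X - 1)" using landau_inner[OF asg sym XK] .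
  show ?thesis using h1 h2 by linarith
qed



lemma core:
  assumes asg: "is_assignment k A" and sym: "is_symmetric k A" and gk: "gam k \<le> real k"
  shows "\<exists>n x. x \<le> n \<and> n \<le> k \<and> (\<Sum>j\<in>{1..k}. rc k A j) \<ge>
     2 * real k * (real k - gam k) + real n * gam k - 2 * real x * (real n - real x)
      - real x * (real x - 1) + real x * gam k - 2 * real x"
proof -
  define \<tau> where "\<tau> = real k - gam k / 2"
  define N where "N = {j \<in> {1..k}. \<forall>l\<in>{1..k}-{j}. real (acnt k A j l) \<le> \<tau>}"
  define G where "G = {1..k} - N"
  define \<theta> where "\<theta> = gam k / 2 - 1"
  define u where "u j = real (card (ownS A j N))" for j
  define X where "X = {j \<in> N. u j > \<theta>}"
  have NK: "N \<subseteq> {1..k}" and GK: "G \<subseteq> {1..k}" and NG: "N \<union> G = {1..k}" "N \<inter> G = {}"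
    unfolding N_def G_def by auto
  have fN: "finite N" and fG: "finite G" using NK GK finite_subset by blast+
  have XN: "X \<subseteq> N" unfolding X_def by auto
  have fX: "finite X" using XN fN finite_subset by blast
  have cG: "card G = k - card N" unfolding G_def using card_Diff_subset[OF fN NK] by simp
  have nk: "card N \<le> k" using card_mono[OF _ NK] by simp
  have xn: "card X \<le> card N" using card_mono[OF fN XN] .
  have hG: "rc k A j \<ge> 2 * (real k - gam k) + 2 * real (card (cownS A j N))" if j: "j \<in> G" for j
  proof -
    from j obtain L where L: "L \<in> {1..k}-{j}" "real (acnt k A j L) > \<tau>" unfolding G_def N_def by force
    have jK: "j \<in> {1..k}" using j GK by auto
    show ?thesis using grow[OF asg jK, of L N] L gk NK unfolding \<tau>_def by auto
  qed
  have hN: "rc k A j \<ge> 2 * (real k - gam k) + gam k - 2 * max 0 (u j - \<theta>) - 2 * real (card (ownS A j G))"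
    if j: "j \<in> N" for j
  proof -
    have jK: "j \<in> {1..k}" using j NK by auto
    have small: "\<forall>l\<in>{1..k}-{j}. real (acnt k A j l) \<le> real k - gam k / 2" using j unfolding N_def \<tau>_def by auto
    show ?thesis using nrow[OF asg jK small NG] unfolding u_def \<theta>_def by linarith
  qed
  have sG: "(\<Sum>j\<in>G. rc k A j) \<ge> real (card G) * (2 * (real k - gam k)) + 2 * real (\<Sum>j\<in>G. card (cownS A j N))"
  proof -
    have "(\<Sum>j\<in>G. rc k A j) \<ge> (\<Sum>j\<in>G. 2 * (real k - gam k) + 2 * real (card (cownS A j N)))"
      using hG by (intro sum_mono) auto
    thus ?thesis by (simp add: sum.distrib sum_distrib_left[symmetric] of_nat_sum)
  qed
  have sN: "(\<Sum>j\<in>N. rc k A j) \<ge> real (card N) * (2 * (real k - gam k) + gam k) - 2 * (\<Sum>j\<in>N. max 0 (u j - \<theta>)) - 2 * real (\<Sum>j\<in>N. card (ownS A j G))"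
  proof -
    have "(\<Sum>j\<in>N. rc k A j) \<ge> (\<Sum>j\<in>N. (2 * (real k - gam k) + gam k) - 2 * max 0 (u j - \<theta>) - 2 * real (card (ownS A j G)))"
      using hN by (intro sum_mono) auto
    thus ?thesis by (simp add: sum_subtractf sum_distrib_left[symmetric] of_nat_sum)
  qed
  have dc: "(\<Sum>j\<in>N. card (ownS A j G)) = (\<Sum>j\<in>G. card (cownS A j N))" using double_count[OF asg sym NK GK] .
  have split: "(\<Sum>j\<in>{1..k}. rc k A j) = (\<Sum>j\<in>N. rc k A j) + (\<Sum>j\<in>G. rc k A j)"
    using NG fN fG by (metis sum.union_disjoint)
  have smax: "(\<Sum>j\<in>N. max 0 (u j - \<theta>)) = (\<Sum>j\<in>X. u j) - real (card X) * \<theta>"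
  proof -
    have "(\<Sum>j\<in>X. u j - \<theta>) = (\<Sum>j\<in>N. if u j > \<theta> then u j - \<theta> else 0)"
      unfolding X_def using fN by (simp add: sum.inter_filter)
    also have "\<dots> = (\<Sum>j\<in>N. max 0 (u j - \<theta>))" by (intro sum.cong) (auto simp: max_def)
    finally show ?thesis by (simp add: sum_subtractf)
  qed
  have land: "2 * (\<Sum>j\<in>X. card (ownS A j N)) \<le> 2 * (card X * (card N - card X)) + card X * (card X - 1)"
    using landau[OF asg sym XN NK] .
  have land_r: "2 * (\<Sum>j\<in>X. u j) \<le> 2 * (real (card X) * (real (card N) - real (card X))) + real (card X) * (real (card X) - 1)"
  proof -
    have "real (2 * (\<Sum>j\<in>X. card (ownS A j N))) \<le> real (2 * (card X * (card N - card X)) + card X * (card X - 1))"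
      using land by (simp only: of_nat_le_iff)
    moreover have "real (2 * (card X * (card N - card X)) + card X * (card X - 1)) = 2 * (real (card X) * (real (card N) - real (card X))) + real (card X) * (real (card X) - 1)"
    proof -
      have r1: "real (card N - card X) = real (card N) - real (card X)" using xn by (simp add: of_nat_diff)
      have e: "real (card X * (card X - 1)) = real (card X) * (real (card X) - 1)"
        by (cases "card X") (auto simp: algebra_simps)
      show ?thesis unfolding of_nat_add e unfolding of_nat_mult r1 by simp
    qed
    moreover have "real (2 * (\<Sum>j\<in>X. card (ownS A j N))) = 2 * (\<Sum>j\<in>X. u j)"
      unfolding u_def by (simp add: of_nat_sum)
    ultimately show ?thesis by linarith
  qed
  have "(\<Sum>j\<in>{1..k}. rc k A j) \<ge>
     2 * real k * (real k - gam k) + real (card N) * gam k - 2 * real (card X) * (real (card N) - real (card X))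
      - real (card X) * (real (card X) - 1) + real (card X) * gam k - 2 * real (card X)"
  proof -
    have rG: "real (card G) = real k - real (card N)" using cG nk by simp
    show ?thesis using split sG sN dc smax land_r rG unfolding \<theta>_def
      by (simp add: algebra_simps)
  qed
  thus ?thesis using xn nk by blast
qed



lemma sqrt3_bounds: "1.732 \<le> sqrt 3" "sqrt 3 \<le> 1.7321"
proof -
  have "sqrt (1.732^2) \<le> sqrt 3" by (intro real_sqrt_le_mono) (simp add: power2_eq_square field_simps)
  thus "1.732 \<le> sqrt 3" by simp
  have "sqrt 3 \<le> sqrt (1.7321^2)" by (intro real_sqrt_le_mono) (simp add: power2_eq_square field_simps)
  thus "sqrt 3 \<le> 1.7321" by simp
qed

lemma delta_bounds:
  assumes k: "k \<ge> (1::nat)"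
  shows "sqrt (3 * (real k)^2 - 2 * real k) \<le> sqrt 3 * real k"
    and "sqrt (3 * (real k)^2 - 2 * real k) \<ge> sqrt 3 * real k - 1"
proof -
  have "sqrt (3 * (real k)^2 - 2 * real k) \<le> sqrt (3 * (real k)^2)" by (intro real_sqrt_le_mono) (simp add: power2_eq_square field_simps)
  also have "\<dots> = sqrt 3 * real k" by (simp add: real_sqrt_mult)
  finally show "sqrt (3 * (real k)^2 - 2 * real k) \<le> sqrt 3 * real k" .
  have s3: "sqrt 3 ^ 2 = 3" by simp
  have b: "1.732 \<le> sqrt 3" using sqrt3_bounds by simp
  show "sqrt (3 * (real k)^2 - 2 * real k) \<ge> sqrt 3 * real k - 1"
  proof (cases "sqrt 3 * real k - 1 \<le> 0")
    case True
    have "real k * 1 \<le> real k * real k" using k by (intro mult_left_mono) auto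
    hence "3 * (real k)^2 - 2 * real k \<ge> 0" by (simp add: power2_eq_square)
    thus ?thesis using True real_sqrt_ge_zero by (meson order_trans)
  next
    case False
    have "(sqrt 3 * real k - 1)^2 \<le> 3 * (real k)^2 - 2 * real k"
    proof -
      have "(sqrt 3 * real k - 1)^2 = 3 * (real k)^2 - 2 * sqrt 3 * real k + 1"
        by (simp add: power2_eq_square algebra_simps)
      moreover have "2 * real k + 1 \<le> 2 * sqrt 3 * real k"
      proof -
        have "(433/250) * real k \<le> sqrt 3 * real k" using b by (intro mult_right_mono) auto
        moreover have "real k \<ge> 1" using k by simp
        ultimately show ?thesis by linarith
      qed
      ultimately show ?thesis by linarith
    qed
    hence "sqrt ((sqrt 3 * real k - 1)^2) \<le> sqrt (3 * (real k)^2 - 2 * real k)" by (rule real_sqrt_le_mono)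
    thus ?thesis using False by simp
  qed
qed

lemma gam_bounds:
  assumes k: "k \<ge> (20::nat)"
  shows "gam k \<ge> (4 - 2 * sqrt 3) * real k - 2" "gam k \<le> (4 - 2 * sqrt 3) * real k + 2" "gam k \<le> real k"
proof -
  define d where "d = sqrt (3 * (real k)^2 - 2 * real k)"
  have d1: "d \<le> sqrt 3 * real k" "d \<ge> sqrt 3 * real k - 1" using delta_bounds[of k] k unfolding d_def by auto
  have fl: "of_int \<lfloor>2 * real k - d\<rfloor> \<le> 2 * real k - d" "of_int \<lfloor>2 * real k - d\<rfloor> > 2 * real k - d - 1"
    by linarith+
  have g: "gam k = 2 * of_int \<lfloor>2 * real k - d\<rfloor>" unfolding gam_def d_def by simp
  have e: "(4 - 2 * sqrt 3) * real k = 4 * real k - 2 * (sqrt 3 * real k)" by (simp add: algebra_simps)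
  show g1: "gam k \<ge> (4 - 2 * sqrt 3) * real k - 2" using g fl d1 e by linarith
  show g2: "gam k \<le> (4 - 2 * sqrt 3) * real k + 2" using g fl d1 e by linarith
  have "(4 - 2 * sqrt 3) * real k \<le> (67/125) * real k" using sqrt3_bounds by (intro mult_right_mono) auto
  moreover have "real k \<ge> 20" using k by simp
  ultimately show "gam k \<le> real k" using g2 by linarith
qed

lemma F_bound:
  fixes x n k g r :: real
  assumes "0 \<le> x" "x \<le> n" "n \<le> k" "g \<ge> (4 - 2 * r) * k - 2" "g \<le> k" "g \<ge> 1"
    and r: "r * r = 3" "1.732 \<le> r" "r \<le> 1.7321" and k: "k \<ge> 20"
  shows "n * g - 2 * x * (n - x) - x * (x - 1) + x * g - 2 * x \<ge> - 5 * k"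
proof -
  define m where "m = 2 * n + 1 - g"
  define M where "M = 2 * k + 1 - g"
  have id4: "4 * (n * g - 2 * x * (n - x) - x * (x - 1) + x * g - 2 * x) = (2 * x - m)^2 + 2 * g * (m + g - 1) - m^2"
    unfolding m_def by (simp add: power2_eq_square algebra_simps)
  show ?thesis
  proof (cases "m \<le> 0")
    case True
    have "n * g - 2 * x * (n - x) - x * (x - 1) + x * g - 2 * x = x * x + x * (- m) + n * g"
      unfolding m_def by (simp add: algebra_simps)
    moreover have "x * x + x * (- m) + n * g \<ge> 0" using True assms by (intro add_nonneg_nonneg mult_nonneg_nonneg) auto
    ultimately show ?thesis using k by linarith
  next
    case False
    have mM: "m \<le> M" unfolding m_def M_def using assms by linarith
    have q1: "m^2 - 2 * g * m \<le> m * (M - 2 * g)"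
    proof -
      have "m * (m - M) \<le> 0" using False mM by (simp add: mult_nonneg_nonpos)
      thus ?thesis by (simp add: power2_eq_square algebra_simps)
    qed
    have q2: "m * (M - 2 * g) \<le> max 0 (M * (M - 2 * g))"
    proof (cases "M - 2 * g \<le> 0")
      case True
      have "m * (M - 2 * g) \<le> 0" using False True by (simp add: mult_nonneg_nonpos)
      thus ?thesis by simp
    next
      case f2: False thus ?thesis using mM False by (simp add: mult_right_mono max_def)
    qed
    define g0 where "g0 = (4 - 2 * r) * k - 2"
    have hdef: "M * (M - 2 * g) - 2 * g^2 + 2 * g = g^2 - (8 * k + 2) * g + (2 * k + 1)^2"
      unfolding M_def by (simp add: power2_eq_square algebra_simps)
    have hdec: "g^2 - (8 * k + 2) * g \<le> g0^2 - (8 * k + 2) * g0"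
    proof -
      have "g^2 - (8 * k + 2) * g - (g0^2 - (8 * k + 2) * g0) = (g - g0) * (g + g0 - 8 * k - 2)"
        by (simp add: power2_eq_square algebra_simps)
      moreover have "g - g0 \<ge> 0" using assms unfolding g0_def by linarith
      moreover have "g + g0 - 8 * k - 2 \<le> 0"
      proof -
        have "(4 - 2 * r) * k \<le> (67/125) * k" using r k by (intro mult_right_mono) auto
        thus ?thesis using assms unfolding g0_def by linarith
      qed
      ultimately show ?thesis using mult_nonneg_nonpos[of "g - g0" "g + g0 - 8 * k - 2"] by linarith
    qed
    have hg0: "g0^2 - (8 * k + 2) * g0 + (2 * k + 1)^2 = (12 * r - 4) * k + 9"
    proof -
      have "g0^2 - (8 * k + 2) * g0 + (2 * k + 1)^2 = (12 * r - 4) * k + 9 + 4 * (r * r - 3) * (k * k)"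
        unfolding g0_def by (simp add: power2_eq_square algebra_simps)
      thus ?thesis using r(1) by simp
    qed
    have "(12 * r - 4) * k \<le> (1681/100) * k" using r k by (intro mult_right_mono) auto
    hence "(12 * r - 4) * k + 9 \<le> 20 * k" using k by linarith
    hence "M * (M - 2 * g) - 2 * g^2 + 2 * g \<le> 20 * k" using hdef hdec hg0 by linarith
    moreover have "- 2 * g^2 + 2 * g \<le> 0"
    proof -
      have "1 * g \<le> g * g" using assms by (intro mult_right_mono) auto
      thus ?thesis by (simp add: power2_eq_square)
    qed
    moreover have "max 0 (M * (M - 2 * g)) - 2 * g^2 + 2 * g \<le> 20 * k"
      using calculation k by (cases "M * (M - 2 * g) \<le> 0") (auto simp: max_def)
    ultimately have A1: "m^2 - 2 * g * m - 2 * g^2 + 2 * g \<le> 20 * k" using q1 q2 by linarith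
    have A2: "(2 * x - m)^2 \<ge> 0" by simp
    have A3: "2 * g * (m + g - 1) = 2 * g * m + 2 * g^2 - 2 * g" by (simp add: power2_eq_square algebra_simps)
    have "4 * (n * g - 2 * x * (n - x) - x * (x - 1) + x * g - 2 * x) \<ge> - 20 * k"
      using id4 A1 A2 A3 by linarith
    moreover have "\<And>E::real. - 20 * k \<le> 4 * E \<Longrightarrow> - 5 * k \<le> E" by linarith
    ultimately show ?thesis by blast
  qed
qed



lemma phi_le1: "phi k t \<le> t" unfolding phi_def by auto
lemma phi_le2: "phi k t \<le> 2 * real k - t - gam k" unfolding phi_def by auto
lemma phi_nonneg: "0 \<le> t \<Longrightarrow> t \<le> real k \<Longrightarrow> gam k \<le> real k \<Longrightarrow> 0 \<le> phi k t"
  unfolding phi_def by auto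
lemma phi_pos: "1 \<le> t \<Longrightarrow> t \<le> real k \<Longrightarrow> gam k < real k \<Longrightarrow> 0 < phi k t"
  unfolding phi_def by auto

lemma card_Row: "card (Row k i) = k" by (simp add: Row_eq card_cartesian_product)
lemma card_Col: "card (Col k i) = k" by (simp add: Col_eq card_cartesian_product)

lemma gfun_nonneg:
  assumes "S \<subseteq> Row k i \<or> S \<subseteq> Col k i" "gam k \<le> real k"
  shows "0 \<le> gfun k i S"
proof -
  have "card S \<le> k" using assms(1) card_mono[of "Row k i" S] card_mono[of "Col k i" S]
    by (auto simp: card_Row card_Col Row_eq Col_eq)
  thus ?thesis unfolding gfun_def using assms(2) by (auto intro!: phi_nonneg)
qed

lemma fcut_nonneg: "gam k \<le> real k \<Longrightarrow> 0 \<le> fcut k S"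
  unfolding fcut_def by (intro add_nonneg_nonneg sum_nonneg gfun_nonneg) auto

lemma rows_asg: "is_assignment k (Row k)"
  unfolding is_assignment_def Vset_def by (auto simp: Row_eq)

lemma rows_fcut:
  assumes l: "l \<in> {1..k}" and gk: "gam k \<le> real k"
  shows "fcut k (Row k l) \<le> 2 * real k - gam k"
proof -
  have r: "(\<Sum>i=1..k. gfun k i (Row k l \<inter> Row k i)) \<le> 0"
  proof (rule sum_nonpos)
    fix i assume i: "i \<in> {1..k}"
    show "gfun k i (Row k l \<inter> Row k i) \<le> 0"
    proof (cases "i = l")
      case True
      hence "gfun k i (Row k l \<inter> Row k i) = phi k 0" using i unfolding gfun_def by (simp add: card_Row Row_eq)
      thus ?thesis using phi_le1[of k 0] by simp
    next
      case False
      hence "Row k l \<inter> Row k i = {}" by (auto simp: Row_eq)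
      hence "gfun k i (Row k l \<inter> Row k i) = phi k 0" unfolding gfun_def by simp
      thus ?thesis using phi_le1[of k 0] by simp
    qed
  qed
  have c: "(\<Sum>i=1..k. gfun k i (Row k l \<inter> Col k i)) \<le> (\<Sum>i=1..k. 1 + (if i = l then real k - gam k else 0))"
  proof (rule sum_mono)
    fix i assume i: "i \<in> {1..k}"
    have e: "Row k l \<inter> Col k i = {(l,i)}" using i l by (auto simp: Row_eq Col_eq)
    show "gfun k i (Row k l \<inter> Col k i) \<le> 1 + (if i = l then real k - gam k else 0)"
    proof (cases "i = l")
      case True
      hence "gfun k i (Row k l \<inter> Col k i) = phi k (real k - 1)" unfolding gfun_def e by simp
      thus ?thesis using phi_le2[of k "real k - 1"] True by simp
    next
      case False
      hence "gfun k i (Row k l \<inter> Col k i) = phi k 1" unfolding gfun_def e by simp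
      thus ?thesis using phi_le1[of k 1] False by simp
    qed
  qed
  have "(\<Sum>i=1..k. 1 + (if i = l then real k - gam k else 0)) = real k + (real k - gam k)"
    using l by (simp add: sum.distrib)
  thus ?thesis using r c unfolding fcut_def by linarith
qed

lemma rows_cost:
  assumes gk: "gam k \<le> real k"
  shows "cost k (Row k) \<le> real k * (2 * real k - gam k)"
proof -
  have "cost k (Row k) \<le> (\<Sum>l=1..k. 2 * real k - gam k)"
    unfolding cost_def using rows_fcut[OF _ gk] by (intro sum_mono) auto
  thus ?thesis by simp
qed

lemma cost_restrict: "cost k A = cost k (\<lambda>l. if l \<in> {1..k} then A l else {})"
  unfolding cost_def by (intro sum.cong refl) simp

lemma fin_costs: "finite {cost k A | A. is_assignment k A}"
proof -
  let ?F = "{f. \<forall>x. (x \<in> {1..k} \<longrightarrow> f x \<in> Pow (Vset k)) \<and> (x \<notin> {1..k} \<longrightarrow> f x = {})}"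
  have "{cost k A | A. is_assignment k A} \<subseteq> cost k ` ?F"
  proof
    fix c assume "c \<in> {cost k A | A. is_assignment k A}"
    then obtain A where A: "is_assignment k A" "c = cost k A" by blast
    have "(\<lambda>l. if l \<in> {1..k} then A l else {}) \<in> ?F" using asg_sub[OF A(1)] by auto
    thus "c \<in> cost k ` ?F" using A cost_restrict by blast
  qed
  moreover have "finite ?F" by (intro finite_set_of_finite_funs) (auto simp: Vset_def)
  ultimately show ?thesis using finite_surj by blast
qed

definition Asym :: "nat \<Rightarrow> nat \<Rightarrow> (nat \<times> nat) set" where
  "Asym k l = {p \<in> Vset k. min (fst p) (snd p) = l}"

lemma Asym_asg: "is_assignment k (Asym k)" "is_symmetric k (Asym k)"
  unfolding is_assignment_def is_symmetric_def Asym_def Vset_def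
  apply (auto simp: min_def)
  subgoal for a b by (cases "a \<le> b") auto
  done

lemma cost_pos:
  assumes asg: "is_assignment k A" and k: "k \<ge> 2" and gk: "gam k < real k"
  shows "cost k A > 0"
proof -
  have gk': "gam k \<le> real k" using gk by simp
  have "(1,2) \<in> Vset k" using k unfolding Vset_def by auto
  then obtain l where l: "l \<in> {1..k}" "(1,2) \<in> A l" using asg_cover[OF asg] by blast
  have k1: "1 \<in> {1..k}" "2 \<in> {1..k}" using k by auto
  have fpos: "fcut k (A l) > 0"
  proof (cases "l = 1")
    case False
    let ?S = "A l \<inter> Row k 1"
    have n11: "(1,1) \<notin> ?S" using asg_diag[OF asg l(1) k1(1)] False by simp
    have mem: "(1,2) \<in> ?S" using l k by (auto simp: Row_eq)
    have fin: "finite ?S" by (auto simp: Row_eq)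
    have "card ?S \<ge> 1" using card_gt_0_iff[of ?S] mem fin by auto
    moreover have "card ?S \<le> k" using card_mono[of "Row k 1" ?S] by (auto simp: card_Row Row_eq)
    ultimately have g: "gfun k 1 ?S > 0" unfolding gfun_def using n11 gk by (auto intro!: phi_pos)
    have "gfun k 1 ?S \<le> (\<Sum>i=1..k. gfun k i (A l \<inter> Row k i))"
      by (rule member_le_sum) (use k1 gk' in \<open>auto intro!: gfun_nonneg\<close>)
    moreover have "0 \<le> (\<Sum>i=1..k. gfun k i (A l \<inter> Col k i))" by (intro sum_nonneg gfun_nonneg) (use gk' in auto)
    ultimately show ?thesis using g unfolding fcut_def by linarith
  next
    case True
    let ?S = "A l \<inter> Col k 2"
    have n22: "(2,2) \<notin> ?S" using asg_diag[OF asg l(1) k1(2)] True by simp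
    have mem: "(1,2) \<in> ?S" using l k True by (auto simp: Col_eq)
    have fin: "finite ?S" by (auto simp: Col_eq)
    have "card ?S \<ge> 1" using card_gt_0_iff[of ?S] mem fin by auto
    moreover have "card ?S \<le> k" using card_mono[of "Col k 2" ?S] by (auto simp: card_Col Col_eq)
    ultimately have g: "gfun k 2 ?S > 0" unfolding gfun_def using n22 gk by (auto intro!: phi_pos)
    have "gfun k 2 ?S \<le> (\<Sum>i=1..k. gfun k i (A l \<inter> Col k i))"
      by (rule member_le_sum) (use k1 gk' in \<open>auto intro!: gfun_nonneg\<close>)
    moreover have "0 \<le> (\<Sum>i=1..k. gfun k i (A l \<inter> Row k i))" by (intro sum_nonneg gfun_nonneg) (use gk' in auto)
    ultimately show ?thesis using g unfolding fcut_def by linarith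
  qed
  have "fcut k (A l) \<le> cost k A" unfolding cost_def
    by (rule member_le_sum) (use l gk' in \<open>auto intro!: fcut_nonneg\<close>)
  thus ?thesis using fpos by linarith
qed



lemma final_num:
  fixes k g r :: real
  assumes r: "1.732 \<le> r" "r \<le> 1.7321" and k: "k \<ge> 20" and g: "g \<le> (4 - 2 * r) * k + 2" "g \<le> k"
  shows "(4 * (k - g) - 10) / (2 * k - g) \<ge> (8 * r - 12) / (2 * r - 2) - 20 / k"
proof -
  define q where "q = r - 1"
  define p where "p = 2 * k - g"
  have q: "(183/250) \<le> q" "q \<le> (7321/10000)" using r unfolding q_def by auto
  have p: "p \<ge> 2 * q * k - 2" unfolding p_def q_def using g by (simp add: algebra_simps)
  have qk: "2 * q * k - 2 > 0"
  proof -
    have "2 * (183/250) * k \<le> 2 * q * k" using q k by (intro mult_right_mono) auto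
    thus ?thesis using k by linarith
  qed
  have R: "(8 * r - 12) / (2 * r - 2) = 4 - 2 / q"
    unfolding q_def using r by (simp add: field_simps)
  have lhs: "(4 * (k - g) - 10) / (2 * k - g) = 4 - (4 * k + 10) / p"
    using p qk unfolding p_def by (simp add: field_simps)
  have s1: "(4 * k + 10) / p \<le> (4 * k + 10) / (2 * q * k - 2)"
    using p qk k by (intro divide_left_mono) auto
  have e: "(2 / q + 20 / k) * (2 * q * k - 2) = 4 * k - 4 / q + 40 * q - 40 / k"
    using q k by (simp add: field_simps)
  have b1: "4 / q \<le> 6" using q by (simp add: divide_le_eq)
  have b2: "40 / k \<le> 2" using k by (simp add: divide_le_eq)
  have "4 * k + 10 \<le> (2 / q + 20 / k) * (2 * q * k - 2)" using e b1 b2 q by linarith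
  hence s2: "(4 * k + 10) / (2 * q * k - 2) \<le> 2 / q + 20 / k" using qk by (simp add: divide_le_eq)
  show ?thesis using R lhs s1 s2 by linarith
qed

theorem theorem9:
  shows "\<exists>C K. \<forall>k::nat. k \<ge> max 1 K \<longrightarrow>
           min_sym_cost k / min_cost k \<ge> (8 * sqrt 3 - 12) / (2 * sqrt 3 - 2) - C / real k"
proof (intro exI allI impI)
  fix k :: nat
  assume "k \<ge> max 1 (20::nat)"
  hence k: "k \<ge> 20" by simp
  have kr: "real k \<ge> 20" using k by simp
  have gb: "gam k \<ge> (4 - 2 * sqrt 3) * real k - 2" "gam k \<le> (4 - 2 * sqrt 3) * real k + 2" "gam k \<le> real k"
    using gam_bounds[OF k] by auto
  have r3: "1.732 \<le> sqrt 3" "sqrt 3 \<le> 1.7321" using sqrt3_bounds by auto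
  have lowc: "(4 - 2 * sqrt 3) * real k \<ge> (2679/5000) * real k" using r3 by (intro mult_right_mono) auto
  have uppc: "(4 - 2 * sqrt 3) * real k \<le> (67/125) * real k" using r3 by (intro mult_right_mono) auto
  have gk_lt: "gam k < real k" using gb uppc kr by linarith
  have g1: "gam k \<ge> 1" using gb lowc kr by linarith
  define Sa where "Sa = {cost k A | A. is_assignment k A}"
  define Ss where "Ss = {cost k A | A. is_assignment k A \<and> is_symmetric k A}"
  have fSa: "finite Sa" unfolding Sa_def by (rule fin_costs)
  have SsSa: "Ss \<subseteq> Sa" unfolding Ss_def Sa_def by blast
  have fSs: "finite Ss" using fSa SsSa finite_subset by blast
  have rowin: "cost k (Row k) \<in> Sa" unfolding Sa_def using rows_asg by blast
  have symin: "cost k (Asym k) \<in> Ss" unfolding Ss_def using Asym_asg by blast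
  have mc: "min_cost k = Min Sa" unfolding min_cost_def Sa_def ..
  have ms: "min_sym_cost k = Min Ss" unfolding min_sym_cost_def Ss_def ..
  have "Min Sa \<in> Sa" using fSa rowin by (intro Min_in) auto
  then obtain A0 where A0: "is_assignment k A0" "Min Sa = cost k A0" unfolding Sa_def by blast
  have mc_pos: "min_cost k > 0" using mc A0 cost_pos[OF A0(1) _ gk_lt] k by simp
  have mc_le: "min_cost k \<le> real k * (2 * real k - gam k)"
    using mc Min_le[OF fSa rowin] rows_cost[OF gb(3)] by linarith
  have "Min Ss \<in> Ss" using fSs symin by (intro Min_in) auto
  then obtain A1 where A1: "is_assignment k A1" "is_symmetric k A1" "Min Ss = cost k A1" unfolding Ss_def by blast
  obtain n x where nx: "x \<le> n" "n \<le> k" and core_b: "(\<Sum>j\<in>{1..k}. rc k A1 j) \<ge>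
     2 * real k * (real k - gam k) + real n * gam k - 2 * real x * (real n - real x)
      - real x * (real x - 1) + real x * gam k - 2 * real x"
    using core[OF A1(1) A1(2) gb(3)] by blast
  have Fb: "real n * gam k - 2 * real x * (real n - real x) - real x * (real x - 1) + real x * gam k - 2 * real x \<ge> - 5 * real k"
    by (rule F_bound[where r = "sqrt 3"]) (use nx gb g1 r3 kr in auto)
  have ms_ge: "min_sym_cost k \<ge> real k * (4 * (real k - gam k) - 10)"
  proof -
    have "min_sym_cost k = 2 * (\<Sum>j\<in>{1..k}. rc k A1 j)" using ms A1 cost_sym[OF A1(1) A1(2)] by simp
    thus ?thesis using core_b Fb by (simp add: algebra_simps)
  qed
  define L where "L = real k * (4 * (real k - gam k) - 10)"
  have gu: "gam k \<le> 67/125 * real k + 2" using gb(2) uppc by linarith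
  have "4 * (real k - gam k) - 10 \<ge> 0" using gu kr by (simp add: algebra_simps)
  hence L0: "L \<ge> 0" unfolding L_def using kr by simp
  have pos2: "real k * (2 * real k - gam k) > 0" using kr gb(3) by simp
  have "min_sym_cost k / min_cost k \<ge> L / min_cost k"
    using ms_ge mc_pos unfolding L_def by (intro divide_right_mono) auto
  moreover have "L / min_cost k \<ge> L / (real k * (2 * real k - gam k))"
    using mc_le mc_pos L0 pos2 by (intro divide_left_mono) auto
  moreover have "L / (real k * (2 * real k - gam k)) = (4 * (real k - gam k) - 10) / (2 * real k - gam k)"
    unfolding L_def using kr by simp
  moreover have "(4 * (real k - gam k) - 10) / (2 * real k - gam k) \<ge> (8 * sqrt 3 - 12) / (2 * sqrt 3 - 2) - 20 / real k"
    using final_num[OF r3 kr gb(2) gb(3)] .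
  ultimately show "min_sym_cost k / min_cost k \<ge> (8 * sqrt 3 - 12) / (2 * sqrt 3 - 2) - 20 / real k" by linarith
qed


end
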